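(* Let $Q_1,Q_1',Q_2,Q_2'$ be finite quandles with $Q_1\approx Q_1'$ and $Q_2\approx Q_2'$. Then $Q_1\times Q_2\approx Q_1'\times Q_2'$.
   Context: A quandle is a set $X$ with a binary operation $*$ such that $a*a=a$; for all $b,c$ there is a unique $a$ with $a*b=c$; and $(a*b)*c=(a*c)*(b*c)$. The product quandle $Q_1\times Q_2$ has componentwise operation $(a,b)*(a',b')=(a*a',b*b')$. $\mathrm{Col}_Q(K)$ is the number of colorings of an oriented knot $K$ by $Q$ (colorings being maps from arcs of a diagram to $Q$ satisfying: over-arc colored $y$, incoming under-arc colored $x$ (fixed orientation convention) implies the other under-arc is colored $x*y$; equivalently homomorphisms from the fundamental quandle of $K$ to $Q$). For quandles $Q,Q'$, write $Q\approx Q'$ if $\mathrm{Col}_Q(K)=\mathrm{Col}_{Q'}(K)$ for every knot $K$. *)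

theory Defs
  imports Main
begin

definition quandle :: "'a set \<Rightarrow> ('a \<Rightarrow> 'a \<Rightarrow> 'a) \<Rightarrow> bool" where
  "quandle X m \<longleftrightarrow>
     (\<forall>a\<in>X. \<forall>b\<in>X. m a b \<in> X) \<and>
     (\<forall>a\<in>X. m a a = a) \<and>
     (\<forall>b\<in>X. \<forall>c\<in>X. \<exists>!a. a \<in> X \<and> m a b = c) \<and>
     (\<forall>a\<in>X. \<forall>b\<in>X. \<forall>c\<in>X. m (m a b) c = m (m a c) (m b c))"

definition prod_op :: "('a \<Rightarrow> 'a \<Rightarrow> 'a) \<Rightarrow> ('b \<Rightarrow> 'b \<Rightarrow> 'b) \<Rightarrow>
    ('a \<times> 'b) \<Rightarrow> ('a \<times> 'b) \<Rightarrow> ('a \<times> 'b)" where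
  "prod_op m m' p q = (m (fst p) (fst q), m' (snd p) (snd q))"

text \<open>Knots are represented as closures of braids (Alexander's theorem).
  A braid word on n strands is a list of crossings (i, pos): the generator
  sigma_i (pos = True) or its inverse (pos = False), crossing strands i and i+1
  (0-based positions).\<close>

definition tr :: "nat \<Rightarrow> nat \<Rightarrow> nat \<Rightarrow> nat" where
  "tr i j x = (if x = i then j else if x = j then i else x)"

definition braid_perm :: "(nat \<times> bool) list \<Rightarrow> nat \<Rightarrow> nat" where
  "braid_perm w = foldr (\<lambda>c p. p \<circ> tr (fst c) (Suc (fst c))) w id"

text \<open>The closure of the braid word w on n strands is a knot (one component).\<close>
definition knot_braid :: "nat \<Rightarrow> (nat \<times> bool) list \<Rightarrow> bool" where
  "knot_braid n w \<longleftrightarrow> 1 \<le> n \<and> (\<forall>c\<in>set w. Suc (fst c) < n) \<and>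
     (\<forall>s<n. \<exists>t. (braid_perm w ^^ t) 0 = s)"

text \<open>Colorings of the closed braid diagram: c j s is the color of strand
  position s at level j (between crossing j-1 and crossing j); level length w
  is identified with level 0 by the closure.  Arcs of the diagram correspond
  bijectively to such level data.\<close>
definition colorings :: "'a set \<Rightarrow> ('a \<Rightarrow> 'a \<Rightarrow> 'a) \<Rightarrow> nat \<Rightarrow> (nat \<times> bool) list
    \<Rightarrow> (nat \<Rightarrow> nat \<Rightarrow> 'a) set" where
  "colorings X m n w = {c.
     (\<forall>j s. j \<le> length w \<and> s < n \<longrightarrow> c j s \<in> X) \<and>
     (\<forall>j s. \<not> (j \<le> length w \<and> s < n) \<longrightarrow> c j s = undefined) \<and>
     (\<forall>s<n. c (length w) s = c 0 s) \<and>
     (\<forall>j<length w. let i = fst (w ! j) in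
        (\<forall>s<n. s \<noteq> i \<and> s \<noteq> Suc i \<longrightarrow> c (Suc j) s = c j s) \<and>
        (if snd (w ! j)
         then c (Suc j) i = c j (Suc i) \<and> c (Suc j) (Suc i) = m (c j i) (c j (Suc i))
         else c j i = c (Suc j) (Suc i) \<and> c j (Suc i) = m (c (Suc j) i) (c (Suc j) (Suc i))))}"

definition Col :: "'a set \<Rightarrow> ('a \<Rightarrow> 'a \<Rightarrow> 'a) \<Rightarrow> nat \<Rightarrow> (nat \<times> bool) list \<Rightarrow> nat" where
  "Col X m n w = card (colorings X m n w)"

definition col_equiv :: "'a set \<Rightarrow> ('a \<Rightarrow> 'a \<Rightarrow> 'a) \<Rightarrow> 'b set \<Rightarrow> ('b \<Rightarrow> 'b \<Rightarrow> 'b) \<Rightarrow> bool" where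
  "col_equiv X m Y m' \<longleftrightarrow> (\<forall>n w. knot_braid n w \<longrightarrow> Col X m n w = Col Y m' n w)"

end

theory Submission
  imports Defs
begin

definition pj1 :: "nat \<Rightarrow> nat \<Rightarrow> (nat \<Rightarrow> nat \<Rightarrow> 'a \<times> 'b) \<Rightarrow> nat \<Rightarrow> nat \<Rightarrow> 'a" where
  "pj1 L n c = (\<lambda>j s. if j \<le> L \<and> s < n then fst (c j s) else undefined)"
definition pj2 :: "nat \<Rightarrow> nat \<Rightarrow> (nat \<Rightarrow> nat \<Rightarrow> 'a \<times> 'b) \<Rightarrow> nat \<Rightarrow> nat \<Rightarrow> 'b" where
  "pj2 L n c = (\<lambda>j s. if j \<le> L \<and> s < n then snd (c j s) else undefined)"
definition pr :: "nat \<Rightarrow> nat \<Rightarrow> (nat \<Rightarrow> nat \<Rightarrow> 'a) \<Rightarrow> (nat \<Rightarrow> nat \<Rightarrow> 'b) \<Rightarrow> nat \<Rightarrow> nat \<Rightarrow> 'a \<times> 'b" where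
  "pr L n c1 c2 = (\<lambda>j s. if j \<le> L \<and> s < n then (c1 j s, c2 j s) else undefined)"

lemma col_prod:
  assumes w: "\<forall>c\<in>set w. Suc (fst c) < n"
  shows "Col (X \<times> Y) (prod_op m m') n w = Col X m n w * Col Y m' n w"
proof -
  let ?L = "length w"
  let ?G = "\<lambda>c. (pj1 ?L n c, pj2 ?L n c)"
  have wi: "\<And>j. j < ?L \<Longrightarrow> Suc (fst (w ! j)) < n" using w by auto
  have wi2: "\<And>j. j < ?L \<Longrightarrow> fst (w ! j) < n" using wi Suc_lessD by blast
  have inj: "inj_on ?G (colorings (X \<times> Y) (prod_op m m') n w)"
  proof (rule inj_onI)
    fix c c' assume c: "c \<in> colorings (X \<times> Y) (prod_op m m') n w"
      and c': "c' \<in> colorings (X \<times> Y) (prod_op m m') n w" and e: "?G c = ?G c'"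
    show "c = c'"
    proof (intro ext)
      fix j s
      show "c j s = c' j s"
      proof (cases "j \<le> ?L \<and> s < n")
        case True
        have "pj1 ?L n c j s = pj1 ?L n c' j s" "pj2 ?L n c j s = pj2 ?L n c' j s"
          using e by auto
        then show ?thesis using True by (auto simp: pj1_def pj2_def intro: prod_eqI)
      next
        case False
        then show ?thesis using c c' unfolding colorings_def by auto
      qed
    qed
  qed
  have img: "?G ` colorings (X \<times> Y) (prod_op m m') n w = colorings X m n w \<times> colorings Y m' n w"
  proof
    show "?G ` colorings (X \<times> Y) (prod_op m m') n w \<subseteq> colorings X m n w \<times> colorings Y m' n w"
    proof clarify
      fix c assume c: "c \<in> colorings (X \<times> Y) (prod_op m m') n w"
      show "pj1 ?L n c \<in> colorings X m n w \<and> pj2 ?L n c \<in> colorings Y m' n w"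
        using c wi wi2 unfolding colorings_def pj1_def pj2_def prod_op_def Let_def
        by (simp add: mem_Times_iff)
    qed
  next
    show "colorings X m n w \<times> colorings Y m' n w \<subseteq> ?G ` colorings (X \<times> Y) (prod_op m m') n w"
    proof clarify
      fix c1 c2 assume c1: "c1 \<in> colorings X m n w" and c2: "c2 \<in> colorings Y m' n w"
      have "pr ?L n c1 c2 \<in> colorings (X \<times> Y) (prod_op m m') n w"
        using c1 c2 wi wi2 unfolding colorings_def pr_def prod_op_def Let_def
        apply (auto split: if_splits)
        done
      moreover have "?G (pr ?L n c1 c2) = (c1, c2)"
        using c1 c2 unfolding colorings_def pr_def pj1_def pj2_def by (auto simp: fun_eq_iff)
      ultimately show "(c1, c2) \<in> ?G ` colorings (X \<times> Y) (prod_op m m') n w" by force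
    qed
  qed
  have "bij_betw ?G (colorings (X \<times> Y) (prod_op m m') n w) (colorings X m n w \<times> colorings Y m' n w)"
    using inj img by (simp add: bij_betw_def)
  then show ?thesis unfolding Col_def by (simp add: bij_betw_same_card card_cartesian_product)
qed

theorem lemma5p1:
  fixes X1 :: "'a set" and m1 :: "'a \<Rightarrow> 'a \<Rightarrow> 'a"
    and X1' :: "'b set" and m1' :: "'b \<Rightarrow> 'b \<Rightarrow> 'b"
    and X2 :: "'c set" and m2 :: "'c \<Rightarrow> 'c \<Rightarrow> 'c"
    and X2' :: "'d set" and m2' :: "'d \<Rightarrow> 'd \<Rightarrow> 'd"
  assumes "quandle X1 m1" "finite X1"
    and "quandle X1' m1'" "finite X1'"
    and "quandle X2 m2" "finite X2"
    and "quandle X2' m2'" "finite X2'"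
    and "col_equiv X1 m1 X1' m1'"
    and "col_equiv X2 m2 X2' m2'"
  shows "col_equiv (X1 \<times> X2) (prod_op m1 m2) (X1' \<times> X2') (prod_op m1' m2')"
  using assms(9,10) unfolding col_equiv_def
  by (auto simp: col_prod knot_braid_def)

end
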